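(* Let $K\ge 1$, $a\in\mathbb{R}$, and $\sigma=\tanh$ applied element-wise. For parameters $\bm c,\bm w,\bm b,\bm c_p\in\mathbb{R}^K$ define, for $x\in[0,2\pi]$, $$\hat u(x)=\bm c^\top\sigma(\bm w x+\bm b)=\sum_{k=1}^K c_k\tanh(w_kx+b_k),\qquad \hat p(x)=\bm c_p^\top\sigma(\bm w x+\bm b)=\sum_{k=1}^K c_{p,k}\tanh(w_kx+b_k),$$ and the loss functionals $$\mathcal L_{\mathcal F}(\bm c,\bm w,\bm b)=\frac1{2\pi}\int_0^{2\pi}\Big(\hat u''(x)+a^2\sin(ax)\Big)^2\,dx,$$ $$\tilde{\mathcal L}_{\mathcal F}(\bm c,\bm w,\bm b,\bm c_p)=\frac1{2\pi}\int_0^{2\pi}\Big[\big(\hat p'(x)+a^2\sin(ax)\big)^2+\big(\hat p(x)-\hat u'(x)\big)^2\Big]\,dx .$$ Set $S=\sum_{l=1}^K|c_l|w_l^2+a^2$ and $T=\|\bm c_p\|_1+\sum_{l=1}^K\max(|c_l|,|c_{p,l}|)\,|w_l|+a^2$. Then there is an absolute constant $C>0$ (independent of $K$, $a$ and all parameters) such that for all parameter values and every $k=1,\dots,K$: $$\Big|\frac{\partial\mathcal L_{\mathcal F}}{\partial c_k}\Big|\le C\,S\,w_k^2,\quad \Big|\frac{\partial\mathcal L_{\mathcal F}}{\partial w_k}\Big|\le C\,S\,|c_k|\,|w_k|\,(|w_k|+1),\quad \Big|\frac{\partial\mathcal L_{\mathcal F}}{\partial b_k}\Big|\le C\,S\,|c_k|\,w_k^2,$$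 and $$\Big|\frac{\partial\tilde{\mathcal L}_{\mathcal F}}{\partial c_k}\Big|\le C\,T\,|w_k|,\quad \Big|\frac{\partial\tilde{\mathcal L}_{\mathcal F}}{\partial w_k}\Big|\le C\,T\,\max(|c_k|,|c_{p,k}|)\max(|w_k|,1),$$ $$\Big|\frac{\partial\tilde{\mathcal L}_{\mathcal F}}{\partial b_k}\Big|\le C\,T\,\max(|c_k|,|c_{p,k}|)\max(|w_k|,1),\quad \Big|\frac{\partial\tilde{\mathcal L}_{\mathcal F}}{\partial c_{p,k}}\Big|\le C\,T\,\max(|w_k|,1).$$
   Context: $\hat u'$, $\hat u''$, $\hat p'$ denote derivatives with respect to $x$. $\mathcal L_{\mathcal F}$ is the (continuous) PDE residual loss for the 1D Poisson equation $u''=-a^2\sin(ax)$ on $(0,2\pi)$, and $\tilde{\mathcal L}_{\mathcal F}$ is the PDE residual loss for the reformulated system $p'=-a^2\sin(ax)$, $p=u'$ (the "extra field" $p$). $\|\cdot\|_1$ is the $\ell^1$ norm on $\mathbb{R}^K$. *)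

theory Defs
  imports "HOL-Analysis.Analysis"
begin

text \<open>Parameter vectors in R^K are functions nat => real; only indices 0..K-1 are used.\<close>

definition u_hat :: "nat \<Rightarrow> (nat \<Rightarrow> real) \<Rightarrow> (nat \<Rightarrow> real) \<Rightarrow> (nat \<Rightarrow> real) \<Rightarrow> real \<Rightarrow> real" where
  "u_hat K c w b x = (\<Sum>k<K. c k * tanh (w k * x + b k))"

definition LF :: "real \<Rightarrow> nat \<Rightarrow> (nat \<Rightarrow> real) \<Rightarrow> (nat \<Rightarrow> real) \<Rightarrow> (nat \<Rightarrow> real) \<Rightarrow> real" where
  "LF a K c w b = (1 / (2 * pi)) *
     integral {0..2*pi} (\<lambda>x. (deriv (deriv (u_hat K c w b)) x + a\<^sup>2 * sin (a * x))\<^sup>2)"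

definition LF_tilde :: "real \<Rightarrow> nat \<Rightarrow> (nat \<Rightarrow> real) \<Rightarrow> (nat \<Rightarrow> real) \<Rightarrow> (nat \<Rightarrow> real) \<Rightarrow> (nat \<Rightarrow> real) \<Rightarrow> real" where
  "LF_tilde a K c w b cp = (1 / (2 * pi)) *
     integral {0..2*pi} (\<lambda>x. (deriv (u_hat K cp w b) x + a\<^sup>2 * sin (a * x))\<^sup>2
                              + (u_hat K cp w b x - deriv (u_hat K c w b) x)\<^sup>2)"

end

theory Submission imports Defs begin

definition s1 :: "real \<Rightarrow> real" where "s1 z = 1 - tanh z ^ 2"
definition s2 :: "real \<Rightarrow> real" where "s2 z = -2 * tanh z * (1 - tanh z ^ 2)"
definition s3 :: "real \<Rightarrow> real" where "s3 z = (1 - tanh z ^ 2) * (6 * tanh z ^ 2 - 2)"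

lemma tanh_d: "((\<lambda>z. tanh z) has_real_derivative s1 z) (at z)"
  unfolding s1_def by (auto intro!: derivative_eq_intros)

lemma s1_d: "(s1 has_real_derivative s2 z) (at z)"
  unfolding s1_def[abs_def] s2_def
  apply (rule derivative_eq_intros tanh_d[unfolded s1_def] | simp)+
  apply (simp add: algebra_simps power2_eq_square)?
  done

lemma s2_d: "(s2 has_real_derivative s3 z) (at z)"
  unfolding s2_def[abs_def] s3_def
  apply (rule derivative_eq_intros tanh_d[unfolded s1_def] | simp)+
  apply (simp add: algebra_simps power2_eq_square)?
  done

lemma key:
  fixes g g' :: "real \<Rightarrow> real \<Rightarrow> real"
  assumes d: "\<And>t x. ((\<lambda>t. g t x) has_real_derivative g' t x) (at t)"
    and cg': "continuous_on UNIV (\<lambda>p. g' (fst p) (snd p))"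
    and cg: "\<And>t. continuous_on {0..2*pi} (g t)"
    and bd: "\<And>x. x \<in> {0..2*pi} \<Longrightarrow> \<bar>g' t0 x\<bar> \<le> B"
  shows "\<bar>deriv (\<lambda>t. (1/(2*pi)) * integral {0..2*pi} (g t)) t0\<bar> \<le> B"
proof -
  have cb: "cbox 0 (2*pi) = {0..2*pi::real}" by simp
  have "((\<lambda>t. integral (cbox 0 (2*pi)) (g t)) has_field_derivative integral (cbox 0 (2*pi)) (g' t0)) (at t0 within UNIV)"
    apply (rule leibniz_rule_field_derivative)
    using d apply blast
    using cg integrable_continuous_real cb apply metis
    using continuous_on_subset[OF cg'] apply (simp add: case_prod_beta)
    by auto
  then have "((\<lambda>t. integral {0..2*pi} (g t)) has_real_derivative integral {0..2*pi} (g' t0)) (at t0)"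
    by (simp add: cb)
  then have "((\<lambda>t. (1/(2*pi)) * integral {0..2*pi} (g t)) has_real_derivative (1/(2*pi)) * integral {0..2*pi} (g' t0)) (at t0)"
    by (rule DERIV_cmult)
  then have e: "deriv (\<lambda>t. (1/(2*pi)) * integral {0..2*pi} (g t)) t0 = (1/(2*pi)) * integral {0..2*pi} (g' t0)"
    by (rule DERIV_imp_deriv)
  have c0: "continuous_on {0..2*pi} (g' t0)"
  proof -
    have "continuous_on {0..2*pi} ((\<lambda>p. g' (fst p) (snd p)) \<circ> (\<lambda>x. (t0,x)))"
      by (rule continuous_on_compose) (auto intro!: continuous_intros continuous_on_subset[OF cg'])
    then show ?thesis by (simp add: o_def)
  qed
  have "norm (integral {0..2*pi} (g' t0)) \<le> integral {0..2*pi} (\<lambda>x. B)"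
    apply (rule integral_norm_bound_integral)
    using c0 integrable_continuous_real apply blast
    apply (intro integrable_continuous_real continuous_on_const)
    using bd by simp
  then have "\<bar>integral {0..2*pi} (g' t0)\<bar> \<le> 2*pi*B" by simp
  then show ?thesis unfolding e using pi_gt_zero
    by (simp add: abs_mult divide_le_eq mult.commute)
qed

definition N0 :: "real \<Rightarrow> real \<Rightarrow> real \<Rightarrow> real \<Rightarrow> real" where "N0 c w b x = c * tanh (w*x+b)"
definition N1 :: "real \<Rightarrow> real \<Rightarrow> real \<Rightarrow> real \<Rightarrow> real" where "N1 c w b x = c * w * s1 (w*x+b)"
definition N2 :: "real \<Rightarrow> real \<Rightarrow> real \<Rightarrow> real \<Rightarrow> real" where "N2 c w b x = c * w^2 * s2 (w*x+b)"

lemma tanh_ch: "(g has_real_derivative E) (at x within s) \<Longrightarrow> D = s1 (g x) * E \<Longrightarrow> ((\<lambda>x. tanh (g x)) has_real_derivative D) (at x within s)"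
  using DERIV_chain2[OF tanh_d] by simp
lemma s1_ch: "(g has_real_derivative E) (at x within s) \<Longrightarrow> D = s2 (g x) * E \<Longrightarrow> ((\<lambda>x. s1 (g x)) has_real_derivative D) (at x within s)"
  using DERIV_chain2[OF s1_d] by simp
lemma s2_ch: "(g has_real_derivative E) (at x within s) \<Longrightarrow> D = s3 (g x) * E \<Longrightarrow> ((\<lambda>x. s2 (g x)) has_real_derivative D) (at x within s)"
  using DERIV_chain2[OF s2_d] by simp

lemmas my_der = tanh_ch s1_ch s2_ch

lemma N0_dc: "((\<lambda>t. N0 t w b x) has_real_derivative tanh (w*x+b)) (at t)"
  unfolding N0_def by (rule derivative_eq_intros refl | simp add: algebra_simps)+
lemma N0_dw: "((\<lambda>t. N0 c t b x) has_real_derivative c * (s1 (t*x+b) * x)) (at t)"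
  unfolding N0_def by (rule derivative_eq_intros my_der refl | simp add: algebra_simps)+
lemma N0_db: "((\<lambda>t. N0 c w t x) has_real_derivative c * s1 (w*x+t)) (at t)"
  unfolding N0_def by (rule derivative_eq_intros my_der refl | simp add: algebra_simps)+
lemma N1_dc: "((\<lambda>t. N1 t w b x) has_real_derivative w * s1 (w*x+b)) (at t)"
  unfolding N1_def by (rule derivative_eq_intros refl | simp add: algebra_simps)+
lemma N1_dw: "((\<lambda>t. N1 c t b x) has_real_derivative c * s1 (t*x+b) + c * t * (s2 (t*x+b) * x)) (at t)"
  unfolding N1_def by (rule derivative_eq_intros my_der refl | simp add: algebra_simps)+
lemma N1_db: "((\<lambda>t. N1 c w t x) has_real_derivative c * w * s2 (w*x+t)) (at t)"
  unfolding N1_def by (rule derivative_eq_intros my_der refl | simp add: algebra_simps)+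
lemma N2_dc: "((\<lambda>t. N2 t w b x) has_real_derivative w^2 * s2 (w*x+b)) (at t)"
  unfolding N2_def by (rule derivative_eq_intros refl | simp add: algebra_simps)+
lemma N2_dw: "((\<lambda>t. N2 c t b x) has_real_derivative c * (2*t) * s2 (t*x+b) + c * t^2 * (s3 (t*x+b) * x)) (at t)"
  unfolding N2_def by (rule derivative_eq_intros my_der refl | simp add: algebra_simps)+
lemma N2_db: "((\<lambda>t. N2 c w t x) has_real_derivative c * w^2 * s3 (w*x+t)) (at t)"
  unfolding N2_def by (rule derivative_eq_intros my_der refl | simp add: algebra_simps)+

lemma du: "deriv (u_hat K c w b) = (\<lambda>x. \<Sum>l<K. N1 (c l) (w l) (b l) x)"
proof
  fix x
  show "deriv (u_hat K c w b) x = (\<Sum>l<K. N1 (c l) (w l) (b l) x)"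
    apply (rule DERIV_imp_deriv)
    unfolding u_hat_def[abs_def] N1_def
    apply (rule derivative_eq_intros my_der refl | simp add: algebra_simps)+
    apply (simp add: algebra_simps s1_def)
    done
qed

lemma ddu: "deriv (\<lambda>x. \<Sum>l<K. N1 (c l) (w l) (b l) x) = (\<lambda>x. \<Sum>l<K. N2 (c l) (w l) (b l) x)"
proof
  fix x
  show "deriv (\<lambda>x. \<Sum>l<K. N1 (c l) (w l) (b l) x) x = (\<Sum>l<K. N2 (c l) (w l) (b l) x)"
    apply (rule DERIV_imp_deriv)
    unfolding N2_def N1_def
    apply (rule derivative_eq_intros my_der refl | simp add: algebra_simps)+
    apply (simp add: algebra_simps power2_eq_square)
    done
qed

lemma LF_eq: "LF a K c w b = (1/(2*pi)) * integral {0..2*pi}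
   (\<lambda>x. ((\<Sum>l<K. N2 (c l) (w l) (b l) x) + a^2 * sin (a*x))^2)"
  unfolding LF_def du ddu by simp

lemma LFt_eq: "LF_tilde a K c w b cp = (1/(2*pi)) * integral {0..2*pi}
   (\<lambda>x. ((\<Sum>l<K. N1 (cp l) (w l) (b l) x) + a^2 * sin (a*x))^2
      + ((\<Sum>l<K. N0 (cp l) (w l) (b l) x) - (\<Sum>l<K. N1 (c l) (w l) (b l) x))^2)"
  unfolding LF_tilde_def du by (simp add: u_hat_def N0_def)

lemma split_c: "k<K \<Longrightarrow> (\<Sum>l<(K::nat). F ((c(k:=t)) l) (w l) (b l) (x::real)) = F t (w k) (b k) x + (\<Sum>l\<in>{..<K}-{k}. F (c l) (w l) (b l) x)"
  by (subst sum.remove[of "{..<K}" k]) (auto intro!: sum.cong)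
lemma split_w: "k<K \<Longrightarrow> (\<Sum>l<(K::nat). F (c l) ((w(k:=t)) l) (b l) (x::real)) = F (c k) t (b k) x + (\<Sum>l\<in>{..<K}-{k}. F (c l) (w l) (b l) x)"
  by (subst sum.remove[of "{..<K}" k]) (auto intro!: sum.cong)
lemma split_b: "k<K \<Longrightarrow> (\<Sum>l<(K::nat). F (c l) (w l) ((b(k:=t)) l) (x::real)) = F (c k) (w k) t x + (\<Sum>l\<in>{..<K}-{k}. F (c l) (w l) (b l) x)"
  by (subst sum.remove[of "{..<K}" k]) (auto intro!: sum.cong)
lemma merge: "k<K \<Longrightarrow> F (c k) (w k) (b k) (x::real) + (\<Sum>l\<in>{..<K}-{k}. F (c l) (w l) (b l) x) = (\<Sum>l<(K::nat). F (c l) (w l) (b l) x)"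
  by (simp add: sum.remove[of "{..<K}" k])

lemma tanh_abs: "\<bar>tanh (z::real)\<bar> \<le> 1"
  using tanh_real_bounds[of z] by auto
lemma s1_bd: "0 \<le> s1 z" "s1 z \<le> 1"
proof -
  have "tanh z ^ 2 \<le> 1" using tanh_abs[of z] abs_square_le_1 by blast
  then show "0 \<le> s1 z" "s1 z \<le> 1" unfolding s1_def by auto
qed
lemma s2_bd: "\<bar>s2 z\<bar> \<le> 2"
proof -
  have "\<bar>s2 z\<bar> = 2 * \<bar>tanh z\<bar> * s1 z" unfolding s2_def s1_def[symmetric] using s1_bd[of z] by (simp add: abs_mult)
  also have "\<dots> \<le> 2 * 1 * 1" using tanh_abs[of z] s1_bd[of z] by (intro mult_mono) auto
  finally show ?thesis by simp
qed
lemma s3_bd: "\<bar>s3 z\<bar> \<le> 4"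
proof -
  have t: "tanh z ^ 2 \<le> 1" "0 \<le> tanh z ^ 2" using tanh_abs[of z] by (auto simp: abs_square_le_1)
  have a: "\<bar>6 * tanh z ^ 2 - 2\<bar> \<le> 4" using t(1) zero_le_power2[of "tanh z"] unfolding abs_le_iff by linarith
  have "\<bar>s3 z\<bar> = s1 z * \<bar>6 * tanh z ^ 2 - 2\<bar>" unfolding s3_def s1_def[symmetric] using s1_bd[of z] by (simp add: abs_mult)
  also have "\<dots> \<le> 1 * 4" using a s1_bd[of z] by (intro mult_mono) auto
  finally show ?thesis by simp
qed

lemma prod_bd: "\<bar>A\<bar> \<le> (\<alpha>::real) \<Longrightarrow> \<bar>D\<bar> \<le> \<beta> \<Longrightarrow> \<bar>2*A*D\<bar> \<le> 2*\<alpha>*\<beta>"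
proof -
  assume h: "\<bar>A\<bar> \<le> \<alpha>" "\<bar>D\<bar> \<le> \<beta>"
  have "\<bar>A\<bar> * \<bar>D\<bar> \<le> \<alpha> * \<beta>" using h by (intro mult_mono) auto
  then show ?thesis by (simp add: abs_mult)
qed

lemma U2bd: "\<bar>\<Sum>l<K. N2 (c l) (w l) (b l) x\<bar> \<le> 2*(\<Sum>l<(K::nat). \<bar>c l\<bar>*(w l)^2)"
proof -
  have "\<bar>\<Sum>l<K. N2 (c l) (w l) (b l) x\<bar> \<le> (\<Sum>l<K. \<bar>N2 (c l) (w l) (b l) x\<bar>)" by (rule sum_abs)
  also have "\<dots> \<le> (\<Sum>l<K. 2*(\<bar>c l\<bar>*(w l)^2))"
  proof (rule sum_mono)
    fix l
    have "\<bar>N2 (c l) (w l) (b l) x\<bar> = (\<bar>c l\<bar>*(w l)^2) * \<bar>s2 (w l * x + b l)\<bar>" by (simp add: N2_def abs_mult)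
    also have "\<dots> \<le> (\<bar>c l\<bar>*(w l)^2) * 2" using s2_bd by (intro mult_left_mono) auto
    finally show "\<bar>N2 (c l) (w l) (b l) x\<bar> \<le> 2*(\<bar>c l\<bar>*(w l)^2)" by simp
  qed
  finally show ?thesis by (simp add: sum_distrib_left)
qed

lemma res2: "\<bar>(\<Sum>l<K. N2 (c l) (w l) (b l) x) + a^2 * sin (a*x)\<bar> \<le> 2*((\<Sum>l<(K::nat). \<bar>c l\<bar>*(w l)^2) + a^2)"
proof -
  have "\<bar>a^2 * sin (a*x)\<bar> \<le> a^2" by (simp add: abs_mult mult_left_le)
  moreover have "0 \<le> a^2" by simp
  ultimately show ?thesis using abs_triangle_ineq[of "\<Sum>l<K. N2 (c l) (w l) (b l) x" "a^2 * sin (a*x)"] U2bd[where K=K and c=c and w=w and b=b and x=x] by (smt (verit))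
qed

lemma N1bd: "\<bar>N1 c w b x\<bar> \<le> \<bar>c\<bar> * \<bar>w\<bar>"
proof -
  have "\<bar>N1 c w b x\<bar> = (\<bar>c\<bar>*\<bar>w\<bar>) * \<bar>s1 (w*x+b)\<bar>" by (simp add: N1_def abs_mult)
  also have "\<dots> \<le> (\<bar>c\<bar>*\<bar>w\<bar>) * 1" using s1_bd[of "w*x+b"] by (intro mult_left_mono) auto
  finally show ?thesis by simp
qed

lemma N0bd: "\<bar>N0 c w b x\<bar> \<le> \<bar>c\<bar>"
proof -
  have "\<bar>N0 c w b x\<bar> = \<bar>c\<bar> * \<bar>tanh (w*x+b)\<bar>" by (simp add: N0_def abs_mult)
  also have "\<dots> \<le> \<bar>c\<bar> * 1" using tanh_abs by (intro mult_left_mono) auto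
  finally show ?thesis by simp
qed

lemma U1bd: "\<bar>\<Sum>l<K. N1 (c l) (w l) (b l) x\<bar> \<le> (\<Sum>l<(K::nat). max \<bar>c l\<bar> \<bar>cp l\<bar> * \<bar>w l\<bar>)"
proof -
  have "\<bar>\<Sum>l<K. N1 (c l) (w l) (b l) x\<bar> \<le> (\<Sum>l<K. \<bar>N1 (c l) (w l) (b l) x\<bar>)" by (rule sum_abs)
  also have "\<dots> \<le> (\<Sum>l<K. max \<bar>c l\<bar> \<bar>cp l\<bar> * \<bar>w l\<bar>)"
  proof (rule sum_mono)
    fix l
    have "\<bar>c l\<bar> * \<bar>w l\<bar> \<le> max \<bar>c l\<bar> \<bar>cp l\<bar> * \<bar>w l\<bar>" by (intro mult_right_mono) auto
    then show "\<bar>N1 (c l) (w l) (b l) x\<bar> \<le> max \<bar>c l\<bar> \<bar>cp l\<bar> * \<bar>w l\<bar>" using N1bd[of "c l" "w l" "b l" x] by linarith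
  qed
  finally show ?thesis .
qed

lemma P1bd: "\<bar>\<Sum>l<K. N1 (cp l) (w l) (b l) x\<bar> \<le> (\<Sum>l<(K::nat). max \<bar>c l\<bar> \<bar>cp l\<bar> * \<bar>w l\<bar>)"
proof -
  have "(\<Sum>l<(K::nat). max \<bar>cp l\<bar> \<bar>c l\<bar> * \<bar>w l\<bar>) = (\<Sum>l<(K::nat). max \<bar>c l\<bar> \<bar>cp l\<bar> * \<bar>w l\<bar>)"
    by (simp add: max.commute)
  then show ?thesis using U1bd[where K=K and c=cp and w=w and b=b and x=x and cp=c] by simp
qed

lemma P0bd: "\<bar>\<Sum>l<K. N0 (cp l) (w l) (b l) x\<bar> \<le> (\<Sum>l<(K::nat). \<bar>cp l\<bar>)"
proof -
  have "\<bar>\<Sum>l<K. N0 (cp l) (w l) (b l) x\<bar> \<le> (\<Sum>l<K. \<bar>N0 (cp l) (w l) (b l) x\<bar>)" by (rule sum_abs)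
  also have "\<dots> \<le> (\<Sum>l<K. \<bar>cp l\<bar>)" by (rule sum_mono) (rule N0bd)
  finally show ?thesis .
qed

lemma sum_nonneg': "0 \<le> (\<Sum>l<(K::nat). max \<bar>c l\<bar> \<bar>cp l\<bar> * \<bar>w l\<bar> :: real)"
  by (intro sum_nonneg) auto
lemma sum_nonneg'': "0 \<le> (\<Sum>l<(K::nat). \<bar>cp l\<bar> :: real)"
  by (intro sum_nonneg) auto

lemma res1: "\<bar>(\<Sum>l<(K::nat). N1 (cp l) (w l) (b l) x) + a^2 * sin (a*x)\<bar> \<le>
   (\<Sum>l<K. \<bar>cp l\<bar>) + (\<Sum>l<K. max \<bar>c l\<bar> \<bar>cp l\<bar> * \<bar>w l\<bar>) + a^2"
proof -
  have "\<bar>a^2 * sin (a*x)\<bar> \<le> a^2" by (simp add: abs_mult mult_left_le)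
  then show ?thesis using abs_triangle_ineq[of "\<Sum>l<K. N1 (cp l) (w l) (b l) x" "a^2 * sin (a*x)"] P1bd[where K=K and cp=cp and w=w and b=b and x=x and c=c] sum_nonneg'[where K=K and c=c and cp=cp and w=w] sum_nonneg''[where K=K and cp=cp] by linarith
qed

lemma resd: "\<bar>(\<Sum>l<(K::nat). N0 (cp l) (w l) (b l) x) - (\<Sum>l<K. N1 (c l) (w l) (b l) x)\<bar> \<le>
   (\<Sum>l<K. \<bar>cp l\<bar>) + (\<Sum>l<K. max \<bar>c l\<bar> \<bar>cp l\<bar> * \<bar>w l\<bar>) + a^2"
  using abs_triangle_ineq4[of "\<Sum>l<K. N0 (cp l) (w l) (b l) x" "\<Sum>l<K. N1 (c l) (w l) (b l) x"] P0bd[where K=K and cp=cp and w=w and b=b and x=x] U1bd[where K=K and c=c and w=w and b=b and x=x and cp=cp] zero_le_power2[of a] by linarith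

lemma LF_c:
  assumes k: "k < K"
  shows "\<bar>deriv (\<lambda>t. LF a K (c(k := t)) w b) (c k)\<bar> \<le> 8 * ((\<Sum>l<K. \<bar>c l\<bar>*(w l)^2) + a^2) * (w k)^2"
proof -
  define R where "R x = (\<Sum>l\<in>{..<K}-{k}. N2 (c l) (w l) (b l) x)" for x
  define g where "g t x = (N2 t (w k) (b k) x + R x + a^2 * sin (a*x))^2" for t x
  define g' where "g' t x = 2*(N2 t (w k) (b k) x + R x + a^2 * sin (a*x)) * ((w k)^2 * s2 (w k*x+b k))" for t x
  have F: "(\<lambda>t. LF a K (c(k:=t)) w b) = (\<lambda>t. (1/(2*pi)) * integral {0..2*pi} (g t))"
    unfolding LF_eq split_c[OF k, of N2] g_def[abs_def] R_def by simp
  show ?thesis unfolding F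
  proof (rule key)
    fix t x show "((\<lambda>t. g t x) has_real_derivative g' t x) (at t)"
      unfolding g_def g'_def by (rule derivative_eq_intros N2_dc refl | simp add: algebra_simps)+
  next
    show "continuous_on UNIV (\<lambda>p. g' (fst p) (snd p))"
      unfolding g'_def R_def N2_def s2_def by (auto intro!: continuous_intros)
  next
    fix t show "continuous_on {0..2*pi} (g t)"
      unfolding g_def R_def N2_def s2_def by (auto intro!: continuous_intros)
  next
    fix x
    have e: "g' (c k) x = 2*((\<Sum>l<K. N2 (c l) (w l) (b l) x) + a^2 * sin (a*x)) * ((w k)^2 * s2 (w k*x+b k))"
      unfolding g'_def R_def merge[OF k, of N2] ..
    have "\<bar>(w k)^2 * s2 (w k*x+b k)\<bar> \<le> (w k)^2 * 2"
      using s2_bd by (simp add: abs_mult mult_left_mono)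
    from prod_bd[OF res2[where K=K and c=c and w=w and b=b and x=x and a=a] this]
    have "\<bar>g' (c k) x\<bar> \<le> 2 * (2 * ((\<Sum>l<K. \<bar>c l\<bar>*(w l)^2) + a^2)) * ((w k)^2 * 2)"
      unfolding e .
    then show "\<bar>g' (c k) x\<bar> \<le> 8 * ((\<Sum>l<K. \<bar>c l\<bar>*(w l)^2) + a^2) * (w k)^2"
      by (simp add: algebra_simps)
  qed
qed

lemma pb: "\<bar>A\<bar> \<le> (P::real) \<Longrightarrow> \<bar>D\<bar> \<le> Q \<Longrightarrow> \<bar>A*D\<bar> \<le> P*Q"
  by (simp add: abs_mult mult_mono')

lemma xb: "0 \<le> x \<Longrightarrow> x \<le> 2*pi \<Longrightarrow> \<bar>x\<bar> \<le> 8"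
  using pi_less_4 by simp

lemma Dw_LF: assumes "0 \<le> x" "x \<le> 2*pi"
  shows "\<bar>c*(2*w)* s2 (w*x+b) + c*w^2 * (s3 (w*x+b)*x)\<bar> \<le> 36*(\<bar>c\<bar>*\<bar>w\<bar>*(\<bar>w\<bar>+1))"
proof -
  have x: "\<bar>x\<bar> \<le> 8" using xb assms by blast
  have 1: "\<bar>c*(2*w)* s2 (w*x+b)\<bar> \<le> (2*(\<bar>c\<bar>*\<bar>w\<bar>))*2"
    by (rule pb) (auto simp: abs_mult s2_bd)
  have 2: "\<bar>c*w^2 * (s3 (w*x+b)*x)\<bar> \<le> (\<bar>c\<bar>*\<bar>w\<bar>*\<bar>w\<bar>)*(4*8)"
    by (rule pb) (auto simp: abs_mult power2_eq_square intro!: pb[OF s3_bd x, simplified])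
  have 3: "0 \<le> \<bar>c\<bar>*\<bar>w\<bar>" "0 \<le> \<bar>c\<bar>*\<bar>w\<bar>*\<bar>w\<bar>" by auto
  have eq: "36*(\<bar>c\<bar>*\<bar>w\<bar>*(\<bar>w\<bar>+1)) = 36*(\<bar>c\<bar>*\<bar>w\<bar>*\<bar>w\<bar>) + 36*(\<bar>c\<bar>*\<bar>w\<bar>)"
    by (simp add: algebra_simps)
  show ?thesis unfolding eq using 1 2 3 abs_triangle_ineq[of "c*(2*w)* s2 (w*x+b)" "c*w^2 * (s3 (w*x+b)*x)"] by linarith
qed

lemma Db_LF: "\<bar>c*w^2 * s3 (w*x+b)\<bar> \<le> (\<bar>c\<bar>*w^2)*4"
  by (rule pb) (auto simp: abs_mult s3_bd)

lemma mMa: fixes c cp :: real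
  shows "\<bar>c\<bar> \<le> max \<bar>c\<bar> \<bar>cp\<bar>" "\<bar>cp\<bar> \<le> max \<bar>c\<bar> \<bar>cp\<bar>" "0 \<le> max \<bar>c\<bar> \<bar>cp\<bar>"
  by simp_all
lemma mMb: fixes w :: real shows "\<bar>w\<bar> \<le> max \<bar>w\<bar> 1" "1 \<le> max \<bar>w\<bar> 1" by simp_all
lemma mMc: fixes c cp w :: real
  shows "max \<bar>c\<bar> \<bar>cp\<bar> * \<bar>w\<bar> \<le> max \<bar>c\<bar> \<bar>cp\<bar> * max \<bar>w\<bar> 1"
    "max \<bar>c\<bar> \<bar>cp\<bar> \<le> max \<bar>c\<bar> \<bar>cp\<bar> * max \<bar>w\<bar> 1"
proof -
  have m: "0 \<le> max \<bar>c\<bar> \<bar>cp\<bar>" by simp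
  have M: "1 \<le> max \<bar>w\<bar> 1" "\<bar>w\<bar> \<le> max \<bar>w\<bar> 1" by simp_all
  show "max \<bar>c\<bar> \<bar>cp\<bar> * \<bar>w\<bar> \<le> max \<bar>c\<bar> \<bar>cp\<bar> * max \<bar>w\<bar> 1" by (rule mult_left_mono[OF M(2) m])
  show "max \<bar>c\<bar> \<bar>cp\<bar> \<le> max \<bar>c\<bar> \<bar>cp\<bar> * max \<bar>w\<bar> 1" using mult_left_mono[OF M(1) m] by simp
qed

lemma Dtw1: assumes "0 \<le> x" "x \<le> 2*pi"
  shows "\<bar>cp* s1 (w*x+b) + cp*w*(s2 (w*x+b)*x)\<bar> \<le> 17*(max \<bar>c\<bar> \<bar>cp\<bar> * max \<bar>w\<bar> 1)"
proof -
  have x: "\<bar>x\<bar> \<le> 8" using xb assms by blast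
  have s: "\<bar>s1 z\<bar> \<le> 1" for z using s1_bd[of z] by auto
  have 1: "\<bar>cp* s1 (w*x+b)\<bar> \<le> max \<bar>c\<bar> \<bar>cp\<bar> * 1" by (rule pb) (auto simp: s)
  have 2: "\<bar>cp*w*(s2 (w*x+b)*x)\<bar> \<le> (max \<bar>c\<bar> \<bar>cp\<bar> * \<bar>w\<bar>)*(2*8)"
    by (rule pb) (auto simp: abs_mult intro!: pb[OF s2_bd x, simplified] mult_right_mono)
  show ?thesis using 1 2 mMa[of c cp] mMb[of w] mMc[of c cp w] abs_triangle_ineq[of "cp* s1 (w*x+b)" "cp*w*(s2 (w*x+b)*x)"] by linarith
qed

lemma Dtw2: assumes "0 \<le> x" "x \<le> 2*pi"
  shows "\<bar>cp*(s1 (w*x+b)*x) - (c* s1 (w*x+b) + c*w*(s2 (w*x+b)*x))\<bar> \<le> 25*(max \<bar>c\<bar> \<bar>cp\<bar> * max \<bar>w\<bar> 1)"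
proof -
  have x: "\<bar>x\<bar> \<le> 8" using xb assms by blast
  have s: "\<bar>s1 z\<bar> \<le> 1" for z using s1_bd[of z] by auto
  have 0: "\<bar>cp*(s1 (w*x+b)*x)\<bar> \<le> max \<bar>c\<bar> \<bar>cp\<bar> * (1*8)" using pb[OF _ pb[OF s x], of cp "max \<bar>c\<bar> \<bar>cp\<bar>"] by simp
  have 1: "\<bar>c* s1 (w*x+b)\<bar> \<le> max \<bar>c\<bar> \<bar>cp\<bar> * 1" by (rule pb) (auto simp: s)
  have 2: "\<bar>c*w*(s2 (w*x+b)*x)\<bar> \<le> (max \<bar>c\<bar> \<bar>cp\<bar> * \<bar>w\<bar>)*(2*8)"
    by (rule pb) (auto simp: abs_mult intro!: pb[OF s2_bd x, simplified] mult_right_mono)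
  show ?thesis using 0 1 2 mMa[of c cp] mMb[of w] mMc[of c cp w] abs_triangle_ineq4[of "cp*(s1 (w*x+b)*x)" "c* s1 (w*x+b) + c*w*(s2 (w*x+b)*x)"]
    abs_triangle_ineq[of "c* s1 (w*x+b)" "c*w*(s2 (w*x+b)*x)"] by linarith
qed

lemma Dtb1: "\<bar>cp*w* s2 (w*x+b)\<bar> \<le> 2*(max \<bar>c\<bar> \<bar>cp\<bar> * max \<bar>w\<bar> 1)"
proof -
  have "\<bar>cp*w* s2 (w*x+b)\<bar> \<le> (max \<bar>c\<bar> \<bar>cp\<bar> * \<bar>w\<bar>)*2"
    by (rule pb) (auto simp: abs_mult intro!: s2_bd mult_right_mono)
  then show ?thesis using mMa[of c cp] mMb[of w] mMc[of c cp w] by linarith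
qed

lemma Dtb2: "\<bar>cp* s1 (w*x+b) - c*w* s2 (w*x+b)\<bar> \<le> 3*(max \<bar>c\<bar> \<bar>cp\<bar> * max \<bar>w\<bar> 1)"
proof -
  have s: "\<bar>s1 z\<bar> \<le> 1" for z using s1_bd[of z] by auto
  have 1: "\<bar>cp* s1 (w*x+b)\<bar> \<le> max \<bar>c\<bar> \<bar>cp\<bar> * 1" by (rule pb) (auto simp: s)
  have 2: "\<bar>c*w* s2 (w*x+b)\<bar> \<le> (max \<bar>c\<bar> \<bar>cp\<bar> * \<bar>w\<bar>)*2"
    by (rule pb) (auto simp: abs_mult intro!: s2_bd mult_right_mono)
  show ?thesis using 1 2 mMa[of c cp] mMb[of w] mMc[of c cp w] abs_triangle_ineq4[of "cp* s1 (w*x+b)" "c*w* s2 (w*x+b)"] by linarith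
qed

lemma Dtcp1: "\<bar>w* s1 (w*x+b)\<bar> \<le> max \<bar>w\<bar> 1"
proof -
  have "\<bar>w* s1 (w*x+b)\<bar> \<le> \<bar>w\<bar>*1" by (rule pb) (use s1_bd[of "w*x+b"] in auto)
  then show ?thesis by simp
qed

lemma Dtcp2: "\<bar>tanh (w*x+b::real)\<bar> \<le> max \<bar>w\<bar> 1"
  using tanh_abs[of "w*x+b"] by simp

lemma sum2_bd: "\<bar>A1\<bar> \<le> T \<Longrightarrow> \<bar>D1\<bar> \<le> B1 \<Longrightarrow> \<bar>A2\<bar> \<le> T \<Longrightarrow> \<bar>D2\<bar> \<le> B2 \<Longrightarrow>
   \<bar>2*A1*D1 + 2*A2*D2\<bar> \<le> 2*T*B1 + 2*(T::real)*B2"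
  using prod_bd[of A1 T D1 B1] prod_bd[of A2 T D2 B2] abs_triangle_ineq[of "2*A1*D1" "2*A2*D2"] by linarith

lemma LF_w:
  assumes k: "k < K"
  shows "\<bar>deriv (\<lambda>t. LF a K c (w(k := t)) b) (w k)\<bar> \<le> 144 * ((\<Sum>l<K. \<bar>c l\<bar>*(w l)^2) + a^2) * (\<bar>c k\<bar>*\<bar>w k\<bar>*(\<bar>w k\<bar>+1))"
proof -
  define R where "R x = (\<Sum>l\<in>{..<K}-{k}. N2 (c l) (w l) (b l) x)" for x
  define g where "g t x = (N2 (c k) t (b k) x + R x + a^2 * sin (a*x))^2" for t x
  define g' where "g' t x = 2*(N2 (c k) t (b k) x + R x + a^2 * sin (a*x)) * (c k * (2*t) * s2 (t*x+b k) + c k * t^2 * (s3 (t*x+b k) * x))" for t x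
  have F: "(\<lambda>t. LF a K c (w(k:=t)) b) = (\<lambda>t. (1/(2*pi)) * integral {0..2*pi} (g t))"
    unfolding LF_eq split_w[OF k, of N2] g_def[abs_def] R_def by simp
  show ?thesis unfolding F
  proof (rule key)
    fix t x show "((\<lambda>t. g t x) has_real_derivative g' t x) (at t)"
      unfolding g_def g'_def by (rule derivative_eq_intros N2_dw refl | simp add: algebra_simps)+
  next
    show "continuous_on UNIV (\<lambda>p. g' (fst p) (snd p))"
      unfolding g'_def R_def N2_def s2_def s3_def by (auto intro!: continuous_intros)
  next
    fix t show "continuous_on {0..2*pi} (g t)"
      unfolding g_def R_def N2_def s2_def by (auto intro!: continuous_intros)
  next
    fix x assume x: "x \<in> {0..2*pi}"
    have e: "g' (w k) x = 2*((\<Sum>l<K. N2 (c l) (w l) (b l) x) + a^2 * sin (a*x)) * (c k * (2*w k) * s2 (w k*x+b k) + c k * (w k)^2 * (s3 (w k*x+b k) * x))"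
      unfolding g'_def R_def merge[OF k, of N2] ..
    from x have "0 \<le> x" "x \<le> 2*pi" by auto
    from prod_bd[OF res2[where K=K and c=c and w=w and b=b and x=x and a=a] Dw_LF[OF this, of "c k" "w k" "b k"]]
    have "\<bar>g' (w k) x\<bar> \<le> 2 * (2 * ((\<Sum>l<K. \<bar>c l\<bar>*(w l)^2) + a^2)) * (36*(\<bar>c k\<bar>*\<bar>w k\<bar>*(\<bar>w k\<bar>+1)))"
      unfolding e .
    then show "\<bar>g' (w k) x\<bar> \<le> 144 * ((\<Sum>l<K. \<bar>c l\<bar>*(w l)^2) + a^2) * (\<bar>c k\<bar>*\<bar>w k\<bar>*(\<bar>w k\<bar>+1))"
      by (simp add: algebra_simps)
  qed
qed

lemma LF_b:
  assumes k: "k < K"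
  shows "\<bar>deriv (\<lambda>t. LF a K c w (b(k := t))) (b k)\<bar> \<le> 16 * ((\<Sum>l<K. \<bar>c l\<bar>*(w l)^2) + a^2) * (\<bar>c k\<bar>*(w k)^2)"
proof -
  define R where "R x = (\<Sum>l\<in>{..<K}-{k}. N2 (c l) (w l) (b l) x)" for x
  define g where "g t x = (N2 (c k) (w k) t x + R x + a^2 * sin (a*x))^2" for t x
  define g' where "g' t x = 2*(N2 (c k) (w k) t x + R x + a^2 * sin (a*x)) * (c k * (w k)^2 * s3 (w k*x+t))" for t x
  have F: "(\<lambda>t. LF a K c w (b(k:=t))) = (\<lambda>t. (1/(2*pi)) * integral {0..2*pi} (g t))"
    unfolding LF_eq split_b[OF k, of N2] g_def[abs_def] R_def by simp
  show ?thesis unfolding F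
  proof (rule key)
    fix t x show "((\<lambda>t. g t x) has_real_derivative g' t x) (at t)"
      unfolding g_def g'_def by (rule derivative_eq_intros N2_db refl | simp add: algebra_simps)+
  next
    show "continuous_on UNIV (\<lambda>p. g' (fst p) (snd p))"
      unfolding g'_def R_def N2_def s2_def s3_def by (auto intro!: continuous_intros)
  next
    fix t show "continuous_on {0..2*pi} (g t)"
      unfolding g_def R_def N2_def s2_def by (auto intro!: continuous_intros)
  next
    fix x
    have e: "g' (b k) x = 2*((\<Sum>l<K. N2 (c l) (w l) (b l) x) + a^2 * sin (a*x)) * (c k * (w k)^2 * s3 (w k*x+b k))"
      unfolding g'_def R_def merge[OF k, of N2] ..
    from prod_bd[OF res2[where K=K and c=c and w=w and b=b and x=x and a=a] Db_LF[of "c k" "w k" x "b k"]]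
    have "\<bar>g' (b k) x\<bar> \<le> 2 * (2 * ((\<Sum>l<K. \<bar>c l\<bar>*(w l)^2) + a^2)) * ((\<bar>c k\<bar>*(w k)^2)*4)"
      unfolding e .
    then show "\<bar>g' (b k) x\<bar> \<le> 16 * ((\<Sum>l<K. \<bar>c l\<bar>*(w l)^2) + a^2) * (\<bar>c k\<bar>*(w k)^2)"
      by (simp add: algebra_simps)
  qed
qed

lemma LFt_c:
  assumes k: "k < K"
  shows "\<bar>deriv (\<lambda>t. LF_tilde a K (c(k := t)) w b cp) (c k)\<bar> \<le> 2 * ((\<Sum>l<K. \<bar>cp l\<bar>) + (\<Sum>l<K. max \<bar>c l\<bar> \<bar>cp l\<bar> * \<bar>w l\<bar>) + a^2) * \<bar>w k\<bar>"
proof -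
  define R where "R x = (\<Sum>l\<in>{..<K}-{k}. N1 (c l) (w l) (b l) x)" for x
  define g where "g t x = ((\<Sum>l<K. N1 (cp l) (w l) (b l) x) + a^2 * sin (a*x))^2 + ((\<Sum>l<K. N0 (cp l) (w l) (b l) x) - (N1 t (w k) (b k) x + R x))^2" for t x
  define g' where "g' t x = 2*((\<Sum>l<K. N0 (cp l) (w l) (b l) x) - (N1 t (w k) (b k) x + R x)) * (-(w k * s1 (w k*x+b k)))" for t x
  have F: "(\<lambda>t. LF_tilde a K (c(k:=t)) w b cp) = (\<lambda>t. (1/(2*pi)) * integral {0..2*pi} (g t))"
    unfolding LFt_eq split_c[OF k, of N1] g_def[abs_def] R_def by simp
  show ?thesis unfolding F
  proof (rule key)
    fix t x show "((\<lambda>t. g t x) has_real_derivative g' t x) (at t)"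
      unfolding g_def g'_def by (rule derivative_eq_intros N1_dc refl | simp add: algebra_simps)+
  next
    show "continuous_on UNIV (\<lambda>p. g' (fst p) (snd p))"
      unfolding g'_def R_def N0_def N1_def s1_def by (auto intro!: continuous_intros)
  next
    fix t show "continuous_on {0..2*pi} (g t)"
      unfolding g_def R_def N0_def N1_def s1_def by (auto intro!: continuous_intros)
  next
    fix x
    have e: "g' (c k) x = 2*((\<Sum>l<K. N0 (cp l) (w l) (b l) x) - (\<Sum>l<K. N1 (c l) (w l) (b l) x)) * (-(w k * s1 (w k*x+b k)))"
      unfolding g'_def R_def merge[OF k, of N1] ..
    have "\<bar>-(w k * s1 (w k*x+b k))\<bar> \<le> \<bar>w k\<bar> * 1"
      unfolding abs_minus_cancel by (rule pb) (use s1_bd[of "w k*x+b k"] in auto)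
    from prod_bd[OF resd[where K=K and c=c and w=w and b=b and x=x and a=a and cp=cp] this]
    show "\<bar>g' (c k) x\<bar> \<le> 2 * ((\<Sum>l<K. \<bar>cp l\<bar>) + (\<Sum>l<K. max \<bar>c l\<bar> \<bar>cp l\<bar> * \<bar>w l\<bar>) + a^2) * \<bar>w k\<bar>"
      unfolding e by simp
  qed
qed

lemma LFt_cp:
  assumes k: "k < K"
  shows "\<bar>deriv (\<lambda>t. LF_tilde a K c w b (cp(k := t))) (cp k)\<bar> \<le> 4 * ((\<Sum>l<K. \<bar>cp l\<bar>) + (\<Sum>l<K. max \<bar>c l\<bar> \<bar>cp l\<bar> * \<bar>w l\<bar>) + a^2) * max \<bar>w k\<bar> 1"
proof -
  define R1 where "R1 x = (\<Sum>l\<in>{..<K}-{k}. N1 (cp l) (w l) (b l) x)" for x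
  define R0 where "R0 x = (\<Sum>l\<in>{..<K}-{k}. N0 (cp l) (w l) (b l) x)" for x
  define g where "g t x = (N1 t (w k) (b k) x + R1 x + a^2 * sin (a*x))^2 + ((N0 t (w k) (b k) x + R0 x) - (\<Sum>l<K. N1 (c l) (w l) (b l) x))^2" for t x
  define g' where "g' t x = 2*(N1 t (w k) (b k) x + R1 x + a^2 * sin (a*x)) * (w k * s1 (w k*x+b k)) + 2*((N0 t (w k) (b k) x + R0 x) - (\<Sum>l<K. N1 (c l) (w l) (b l) x)) * tanh (w k*x+b k)" for t x
  have F: "(\<lambda>t. LF_tilde a K c w b (cp(k:=t))) = (\<lambda>t. (1/(2*pi)) * integral {0..2*pi} (g t))"
    unfolding LFt_eq split_c[OF k, of N1] split_c[OF k, of N0] g_def[abs_def] R1_def R0_def by simp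
  show ?thesis unfolding F
  proof (rule key)
    fix t x show "((\<lambda>t. g t x) has_real_derivative g' t x) (at t)"
      unfolding g_def g'_def by (rule derivative_eq_intros N1_dc N0_dc refl | simp add: algebra_simps)+
  next
    show "continuous_on UNIV (\<lambda>p. g' (fst p) (snd p))"
      unfolding g'_def R1_def R0_def N0_def N1_def s1_def by (auto intro!: continuous_intros)
  next
    fix t show "continuous_on {0..2*pi} (g t)"
      unfolding g_def R1_def R0_def N0_def N1_def s1_def by (auto intro!: continuous_intros)
  next
    fix x
    have e: "g' (cp k) x = 2*((\<Sum>l<K. N1 (cp l) (w l) (b l) x) + a^2 * sin (a*x)) * (w k * s1 (w k*x+b k)) + 2*((\<Sum>l<K. N0 (cp l) (w l) (b l) x) - (\<Sum>l<K. N1 (c l) (w l) (b l) x)) * tanh (w k*x+b k)"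
      unfolding g'_def R1_def R0_def merge[OF k, of N1] merge[OF k, of N0] ..
    from sum2_bd[OF res1[where K=K and c=c and w=w and b=b and x=x and a=a and cp=cp] Dtcp1[of "w k" x "b k"] resd[where K=K and c=c and w=w and b=b and x=x and a=a and cp=cp] Dtcp2[of "w k" x "b k"]]
    have "\<bar>g' (cp k) x\<bar> \<le> 2 * ((\<Sum>l<K. \<bar>cp l\<bar>) + (\<Sum>l<K. max \<bar>c l\<bar> \<bar>cp l\<bar> * \<bar>w l\<bar>) + a^2) * max \<bar>w k\<bar> 1 + 2 * ((\<Sum>l<K. \<bar>cp l\<bar>) + (\<Sum>l<K. max \<bar>c l\<bar> \<bar>cp l\<bar> * \<bar>w l\<bar>) + a^2) * max \<bar>w k\<bar> 1"
      unfolding e .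
    then show "\<bar>g' (cp k) x\<bar> \<le> 4 * ((\<Sum>l<K. \<bar>cp l\<bar>) + (\<Sum>l<K. max \<bar>c l\<bar> \<bar>cp l\<bar> * \<bar>w l\<bar>) + a^2) * max \<bar>w k\<bar> 1"
      by (simp add: algebra_simps)
  qed
qed

lemma LFt_w:
  assumes k: "k < K"
  shows "\<bar>deriv (\<lambda>t. LF_tilde a K c (w(k := t)) b cp) (w k)\<bar> \<le> 84 * ((\<Sum>l<K. \<bar>cp l\<bar>) + (\<Sum>l<K. max \<bar>c l\<bar> \<bar>cp l\<bar> * \<bar>w l\<bar>) + a^2) * (max \<bar>c k\<bar> \<bar>cp k\<bar> * max \<bar>w k\<bar> 1)"
proof -
  define R1 where "R1 x = (\<Sum>l\<in>{..<K}-{k}. N1 (cp l) (w l) (b l) x)" for x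
  define R0 where "R0 x = (\<Sum>l\<in>{..<K}-{k}. N0 (cp l) (w l) (b l) x)" for x
  define Rc where "Rc x = (\<Sum>l\<in>{..<K}-{k}. N1 (c l) (w l) (b l) x)" for x
  define g where "g t x = (N1 (cp k) t (b k) x + R1 x + a^2 * sin (a*x))^2 + ((N0 (cp k) t (b k) x + R0 x) - (N1 (c k) t (b k) x + Rc x))^2" for t x
  define g' where "g' t x = 2*(N1 (cp k) t (b k) x + R1 x + a^2 * sin (a*x)) * (cp k * s1 (t*x+b k) + cp k * t * (s2 (t*x+b k) * x)) + 2*((N0 (cp k) t (b k) x + R0 x) - (N1 (c k) t (b k) x + Rc x)) * (cp k * (s1 (t*x+b k) * x) - (c k * s1 (t*x+b k) + c k * t * (s2 (t*x+b k) * x)))" for t x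
  have F: "(\<lambda>t. LF_tilde a K c (w(k:=t)) b cp) = (\<lambda>t. (1/(2*pi)) * integral {0..2*pi} (g t))"
    unfolding LFt_eq split_w[OF k, of N1] split_w[OF k, of N0] g_def[abs_def] R1_def R0_def Rc_def by simp
  show ?thesis unfolding F
  proof (rule key)
    fix t x show "((\<lambda>t. g t x) has_real_derivative g' t x) (at t)"
      unfolding g_def g'_def by (rule derivative_eq_intros N1_dw N0_dw refl | simp add: algebra_simps)+
  next
    show "continuous_on UNIV (\<lambda>p. g' (fst p) (snd p))"
      unfolding g'_def R1_def R0_def Rc_def N0_def N1_def s1_def s2_def by (auto intro!: continuous_intros)
  next
    fix t show "continuous_on {0..2*pi} (g t)"
      unfolding g_def R1_def R0_def Rc_def N0_def N1_def s1_def by (auto intro!: continuous_intros)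
  next
    fix x assume x: "x \<in> {0..2*pi}"
    from x have x': "0 \<le> x" "x \<le> 2*pi" by auto
    have e: "g' (w k) x = 2*((\<Sum>l<K. N1 (cp l) (w l) (b l) x) + a^2 * sin (a*x)) * (cp k * s1 (w k*x+b k) + cp k * w k * (s2 (w k*x+b k) * x)) + 2*((\<Sum>l<K. N0 (cp l) (w l) (b l) x) - (\<Sum>l<K. N1 (c l) (w l) (b l) x)) * (cp k * (s1 (w k*x+b k) * x) - (c k * s1 (w k*x+b k) + c k * w k * (s2 (w k*x+b k) * x)))"
      unfolding g'_def R1_def R0_def Rc_def merge[OF k, of N1] merge[OF k, of N0] ..
    from sum2_bd[OF res1[where K=K and c=c and w=w and b=b and x=x and a=a and cp=cp] Dtw1[OF x', of "cp k" "w k" "b k" "c k"] resd[where K=K and c=c and w=w and b=b and x=x and a=a and cp=cp] Dtw2[OF x', of "cp k" "w k" "b k" "c k"]]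
    show "\<bar>g' (w k) x\<bar> \<le> 84 * ((\<Sum>l<K. \<bar>cp l\<bar>) + (\<Sum>l<K. max \<bar>c l\<bar> \<bar>cp l\<bar> * \<bar>w l\<bar>) + a^2) * (max \<bar>c k\<bar> \<bar>cp k\<bar> * max \<bar>w k\<bar> 1)"
      unfolding e by (simp add: algebra_simps)
  qed
qed

lemma LFt_b:
  assumes k: "k < K"
  shows "\<bar>deriv (\<lambda>t. LF_tilde a K c w (b(k := t)) cp) (b k)\<bar> \<le> 10 * ((\<Sum>l<K. \<bar>cp l\<bar>) + (\<Sum>l<K. max \<bar>c l\<bar> \<bar>cp l\<bar> * \<bar>w l\<bar>) + a^2) * (max \<bar>c k\<bar> \<bar>cp k\<bar> * max \<bar>w k\<bar> 1)"
proof -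
  define R1 where "R1 x = (\<Sum>l\<in>{..<K}-{k}. N1 (cp l) (w l) (b l) x)" for x
  define R0 where "R0 x = (\<Sum>l\<in>{..<K}-{k}. N0 (cp l) (w l) (b l) x)" for x
  define Rc where "Rc x = (\<Sum>l\<in>{..<K}-{k}. N1 (c l) (w l) (b l) x)" for x
  define g where "g t x = (N1 (cp k) (w k) t x + R1 x + a^2 * sin (a*x))^2 + ((N0 (cp k) (w k) t x + R0 x) - (N1 (c k) (w k) t x + Rc x))^2" for t x
  define g' where "g' t x = 2*(N1 (cp k) (w k) t x + R1 x + a^2 * sin (a*x)) * (cp k * w k * s2 (w k*x+t)) + 2*((N0 (cp k) (w k) t x + R0 x) - (N1 (c k) (w k) t x + Rc x)) * (cp k * s1 (w k*x+t) - c k * w k * s2 (w k*x+t))" for t x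
  have F: "(\<lambda>t. LF_tilde a K c w (b(k:=t)) cp) = (\<lambda>t. (1/(2*pi)) * integral {0..2*pi} (g t))"
    unfolding LFt_eq split_b[OF k, of N1] split_b[OF k, of N0] g_def[abs_def] R1_def R0_def Rc_def by simp
  show ?thesis unfolding F
  proof (rule key)
    fix t x show "((\<lambda>t. g t x) has_real_derivative g' t x) (at t)"
      unfolding g_def g'_def by (rule derivative_eq_intros N1_db N0_db refl | simp add: algebra_simps)+
  next
    show "continuous_on UNIV (\<lambda>p. g' (fst p) (snd p))"
      unfolding g'_def R1_def R0_def Rc_def N0_def N1_def s1_def s2_def by (auto intro!: continuous_intros)
  next
    fix t show "continuous_on {0..2*pi} (g t)"
      unfolding g_def R1_def R0_def Rc_def N0_def N1_def s1_def by (auto intro!: continuous_intros)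
  next
    fix x
    have e: "g' (b k) x = 2*((\<Sum>l<K. N1 (cp l) (w l) (b l) x) + a^2 * sin (a*x)) * (cp k * w k * s2 (w k*x+b k)) + 2*((\<Sum>l<K. N0 (cp l) (w l) (b l) x) - (\<Sum>l<K. N1 (c l) (w l) (b l) x)) * (cp k * s1 (w k*x+b k) - c k * w k * s2 (w k*x+b k))"
      unfolding g'_def R1_def R0_def Rc_def merge[OF k, of N1] merge[OF k, of N0] ..
    from sum2_bd[OF res1[where K=K and c=c and w=w and b=b and x=x and a=a and cp=cp] Dtb1[of "cp k" "w k" x "b k" "c k"] resd[where K=K and c=c and w=w and b=b and x=x and a=a and cp=cp] Dtb2[of "cp k" "w k" x "b k" "c k"]]
    show "\<bar>g' (b k) x\<bar> \<le> 10 * ((\<Sum>l<K. \<bar>cp l\<bar>) + (\<Sum>l<K. max \<bar>c l\<bar> \<bar>cp l\<bar> * \<bar>w l\<bar>) + a^2) * (max \<bar>c k\<bar> \<bar>cp k\<bar> * max \<bar>w k\<bar> 1)"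
      unfolding e by (simp add: algebra_simps)
  qed
qed

lemma fin: "X \<le> \<alpha> * P \<Longrightarrow> 0 \<le> P \<Longrightarrow> \<alpha> \<le> \<beta> \<Longrightarrow> X \<le> \<beta> * (P::real)"
  by (meson mult_right_mono order_trans)

theorem theorem4p1:
  shows "\<exists>C>0. \<forall>(K::nat) (a::real) (c::nat\<Rightarrow>real) (w::nat\<Rightarrow>real) (b::nat\<Rightarrow>real) (cp::nat\<Rightarrow>real) k.
     k < K \<longrightarrow>
     (let S = (\<Sum>l<K. \<bar>c l\<bar> * (w l)\<^sup>2) + a\<^sup>2;
          T = (\<Sum>l<K. \<bar>cp l\<bar>) + (\<Sum>l<K. max \<bar>c l\<bar> \<bar>cp l\<bar> * \<bar>w l\<bar>) + a\<^sup>2;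
          m = max \<bar>c k\<bar> \<bar>cp k\<bar>
      in \<bar>deriv (\<lambda>t. LF a K (c(k := t)) w b) (c k)\<bar> \<le> C * S * (w k)\<^sup>2
       \<and> \<bar>deriv (\<lambda>t. LF a K c (w(k := t)) b) (w k)\<bar> \<le> C * S * \<bar>c k\<bar> * \<bar>w k\<bar> * (\<bar>w k\<bar> + 1)
       \<and> \<bar>deriv (\<lambda>t. LF a K c w (b(k := t))) (b k)\<bar> \<le> C * S * \<bar>c k\<bar> * (w k)\<^sup>2
       \<and> \<bar>deriv (\<lambda>t. LF_tilde a K (c(k := t)) w b cp) (c k)\<bar> \<le> C * T * \<bar>w k\<bar>
       \<and> \<bar>deriv (\<lambda>t. LF_tilde a K c (w(k := t)) b cp) (w k)\<bar> \<le> C * T * m * max \<bar>w k\<bar> 1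
       \<and> \<bar>deriv (\<lambda>t. LF_tilde a K c w (b(k := t)) cp) (b k)\<bar> \<le> C * T * m * max \<bar>w k\<bar> 1
       \<and> \<bar>deriv (\<lambda>t. LF_tilde a K c w b (cp(k := t))) (cp k)\<bar> \<le> C * T * max \<bar>w k\<bar> 1)"
proof (intro exI[of _ 1000] conjI allI impI)
  show "(0::real) < 1000" by simp
  fix K :: nat and a :: real and c w b cp :: "nat \<Rightarrow> real" and k
  assume k: "k < K"
  define S where "S = (\<Sum>l<K. \<bar>c l\<bar> * (w l)\<^sup>2) + a\<^sup>2"
  define T where "T = (\<Sum>l<K. \<bar>cp l\<bar>) + (\<Sum>l<K. max \<bar>c l\<bar> \<bar>cp l\<bar> * \<bar>w l\<bar>) + a\<^sup>2"
  have S0: "0 \<le> S" unfolding S_def by (intro add_nonneg_nonneg sum_nonneg) auto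
  have T0: "0 \<le> T" unfolding T_def by (intro add_nonneg_nonneg sum_nonneg) auto
  note L1 = LF_c[OF k, of a c w b, folded S_def, unfolded mult.assoc]
  note L2 = LF_w[OF k, of a c w b, folded S_def, unfolded mult.assoc]
  note L3 = LF_b[OF k, of a c w b, folded S_def, unfolded mult.assoc]
  note L4 = LFt_c[OF k, of a c w b cp, folded T_def, unfolded mult.assoc]
  note L5 = LFt_w[OF k, of a c w b cp, folded T_def, unfolded mult.assoc]
  note L6 = LFt_b[OF k, of a c w b cp, folded T_def, unfolded mult.assoc]
  note L7 = LFt_cp[OF k, of a c w b cp, folded T_def, unfolded mult.assoc]
  show "let S = (\<Sum>l<K. \<bar>c l\<bar> * (w l)\<^sup>2) + a\<^sup>2;
          T = (\<Sum>l<K. \<bar>cp l\<bar>) + (\<Sum>l<K. max \<bar>c l\<bar> \<bar>cp l\<bar> * \<bar>w l\<bar>) + a\<^sup>2;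
          m = max \<bar>c k\<bar> \<bar>cp k\<bar>
      in \<bar>deriv (\<lambda>t. LF a K (c(k := t)) w b) (c k)\<bar> \<le> 1000 * S * (w k)\<^sup>2
       \<and> \<bar>deriv (\<lambda>t. LF a K c (w(k := t)) b) (w k)\<bar> \<le> 1000 * S * \<bar>c k\<bar> * \<bar>w k\<bar> * (\<bar>w k\<bar> + 1)
       \<and> \<bar>deriv (\<lambda>t. LF a K c w (b(k := t))) (b k)\<bar> \<le> 1000 * S * \<bar>c k\<bar> * (w k)\<^sup>2
       \<and> \<bar>deriv (\<lambda>t. LF_tilde a K (c(k := t)) w b cp) (c k)\<bar> \<le> 1000 * T * \<bar>w k\<bar>
       \<and> \<bar>deriv (\<lambda>t. LF_tilde a K c (w(k := t)) b cp) (w k)\<bar> \<le> 1000 * T * m * max \<bar>w k\<bar> 1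
       \<and> \<bar>deriv (\<lambda>t. LF_tilde a K c w (b(k := t)) cp) (b k)\<bar> \<le> 1000 * T * m * max \<bar>w k\<bar> 1
       \<and> \<bar>deriv (\<lambda>t. LF_tilde a K c w b (cp(k := t))) (cp k)\<bar> \<le> 1000 * T * max \<bar>w k\<bar> 1"
    unfolding Let_def S_def[symmetric] T_def[symmetric] mult.assoc
    apply (intro conjI)
    apply (rule fin[OF L1]; use S0 in simp)
    apply (rule fin[OF L2]; use S0 in simp)
    apply (rule fin[OF L3]; use S0 in simp)
    apply (rule fin[OF L4]; use T0 in simp)
    apply (rule fin[OF L5]; use T0 in simp)
    apply (rule fin[OF L6]; use T0 in simp)
    apply (rule fin[OF L7]; use T0 in simp)
    done
qed

end
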